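(* Let $G$ be a good finite group and let $N$ be a normal subgroup of $G$ of index $2$. Then the cyclic subgroups $\langle x\rangle$, where $x$ ranges over the $2$-elements of $G$ lying in $G\setminus N$, are not all conjugate in $G$; that is, there exist $2$-elements $x,y\in G\setminus N$ such that $\langle x\rangle$ and $\langle y\rangle$ are not conjugate in $G$.
   Context: A finite group is called good if its Sylow-2 subgroup is trivial or noncyclic. A $2$-element of $G$ is an element whose order is a power of $2$. *)

theory Defs
  imports "HOL-Algebra.Algebra" "HOL-Computational_Algebra.Primes"
begin

definition sylow2_subgroup :: "('a, 'b) monoid_scheme \<Rightarrow> 'a set \<Rightarrow> bool" where
  "sylow2_subgroup G P \<longleftrightarrow> subgroup P G \<and> card P = 2 ^ multiplicity (2::nat) (order G)"

definition good_group :: "('a, 'b) monoid_scheme \<Rightarrow> bool" where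
  "good_group G \<longleftrightarrow> (\<forall>P. sylow2_subgroup G P \<longrightarrow>
      P = {\<one>\<^bsub>G\<^esub>} \<or> \<not> cyclic_group (subgroup_generated G P))"

definition two_element :: "('a, 'b) monoid_scheme \<Rightarrow> 'a \<Rightarrow> bool" where
  "two_element G x \<longleftrightarrow> x \<in> carrier G \<and> (\<exists>k::nat. group.ord G x = 2 ^ k)"

definition conj_set :: "('a, 'b) monoid_scheme \<Rightarrow> 'a \<Rightarrow> 'a set \<Rightarrow> 'a set" where
  "conj_set G g H = (\<lambda>h. g \<otimes>\<^bsub>G\<^esub> h \<otimes>\<^bsub>G\<^esub> inv\<^bsub>G\<^esub> g) ` H"

end

theory Submission
  imports Defs
begin


lemma involution_parity:
  assumes "finite A" "\<forall>a\<in>A. f a \<in> A \<and> f (f a) = a"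
  shows "card A mod 2 = card {a\<in>A. f a = a} mod 2"
  using assms
proof (induction "card A" arbitrary: A rule: less_induct)
  case less
  show ?case
  proof (cases "\<forall>a\<in>A. f a = a")
    case True
    then have "{a\<in>A. f a = a} = A" by auto
    then show ?thesis by simp
  next
    case False
    then obtain a where a: "a \<in> A" "f a \<noteq> a" by auto
    define A' where "A' = A - {a, f a}"
    have fa: "f a \<in> A" using less a by auto
    have cA: "card A = card A' + 2"
    proof -
      have "card A' = card A - card {a, f a}" unfolding A'_def
        using a fa less(2) by (subst card_Diff_subset) auto
      moreover have "card {a, f a} = 2" using a by auto
      moreover have "card A \<ge> 2"
      proof -
        have "card {a, f a} \<le> card A" using a fa less(2) by (intro card_mono) auto
        then show ?thesis using a by auto
      qed
      ultimately show ?thesis by simp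
    qed
    have h: "\<forall>b\<in>A'. f b \<in> A' \<and> f (f b) = b"
    proof
      fix b assume b: "b \<in> A'"
      then have bA: "b \<in> A" "b \<noteq> a" "b \<noteq> f a" unfolding A'_def by auto
      have ffb: "f (f b) = b" "f b \<in> A" using less(3) bA(1) by auto
      have "f b \<noteq> a" using ffb bA by auto
      moreover have "f b \<noteq> f a"
      proof
        assume "f b = f a"
        then have "f (f b) = f (f a)" by simp
        then show False using ffb less(3) a bA by auto
      qed
      ultimately show "f b \<in> A' \<and> f (f b) = b" using ffb unfolding A'_def by auto
    qed
    have "card A' mod 2 = card {b\<in>A'. f b = b} mod 2"
      using less(1)[of A'] cA h less(2) unfolding A'_def by auto
    moreover have "{b\<in>A'. f b = b} = {b\<in>A. f b = b}"
      unfolding A'_def using a less(3) by auto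
    ultimately show ?thesis using cA by simp
  qed
qed

lemma perm_parity:
  assumes "finite A" "\<forall>a\<in>A. f a \<in> A" "\<forall>a\<in>A. (f ^^ (2^k)) a = a"
  shows "card A mod 2 = card {a\<in>A. f a = a} mod 2"
  using assms(2,3)
proof (induction k arbitrary: f)
  case 0
  then have "{a\<in>A. f a = a} = A" by auto
  then show ?case by simp
next
  case (Suc k)
  define g where "g = f \<circ> f"
  have g2: "g = f ^^ 2" unfolding g_def by (simp add: numeral_2_eq_2)
  have "\<forall>a\<in>A. (g ^^ (2^k)) a = a"
    using Suc.prems(2) by (simp add: g2 funpow_mult mult.commute)
  moreover have "\<forall>a\<in>A. g a \<in> A" using Suc.prems(1) by (simp add: g_def)
  ultimately have 1: "card A mod 2 = card {a\<in>A. g a = a} mod 2"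
    using Suc.IH by blast
  have 2: "card {a\<in>A. g a = a} mod 2 = card {b\<in>{a\<in>A. g a = a}. f b = b} mod 2"
    by (rule involution_parity) (use assms(1) Suc.prems(1) in \<open>auto simp: g_def\<close>)
  have "{b\<in>{a\<in>A. g a = a}. f b = b} = {a\<in>A. f a = a}" by (auto simp: g_def)
  with 1 2 show ?case by simp
qed




context group begin

lemma conj_gen:
  assumes g: "g \<in> carrier G" and S: "S \<subseteq> carrier G" and K: "subgroup K G"
    and h: "\<forall>s\<in>S. g \<otimes> s \<otimes> inv g \<in> K" and c: "c \<in> generate G S"
  shows "g \<otimes> c \<otimes> inv g \<in> K"
  using c
proof (induction rule: generate.induct)
  case one
  then show ?case using g by (simp add: subgroup.one_closed[OF K])
next
  case (incl h)
  then show ?case using h by auto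
next
  case (inv h)
  have "g \<otimes> inv h \<otimes> inv g = inv (g \<otimes> h \<otimes> inv g)"
    using g inv S by (simp add: inv_mult_group m_assoc subset_iff)
  then show ?case using h inv subgroup.m_inv_closed[OF K] by auto
next
  case (eng h1 h2)
  have c1: "h1 \<in> carrier G" "h2 \<in> carrier G"
    using eng generate_in_carrier[OF S] by auto
  have "g \<otimes> (h1 \<otimes> h2) \<otimes> inv g = (g \<otimes> h1 \<otimes> inv g) \<otimes> (g \<otimes> h2 \<otimes> inv g)"
    using g c1 by (simp add: m_assoc) (simp add: m_assoc[symmetric])
  then show ?case using eng subgroup.m_closed[OF K] by auto
qed

lemma conj_set_sub: "g \<in> carrier G \<Longrightarrow> D \<subseteq> carrier G \<Longrightarrow> conj_set G g D \<subseteq> carrier G"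
  unfolding conj_set_def by auto

lemma conj_set_mult:
  assumes "a \<in> carrier G" "b \<in> carrier G" "D \<subseteq> carrier G"
  shows "conj_set G (a \<otimes> b) D = conj_set G a (conj_set G b D)"
  unfolding conj_set_def image_image
  using assms by (intro image_cong) (auto simp: inv_mult_group m_assoc subset_iff)

lemma conj_set_one: "D \<subseteq> carrier G \<Longrightarrow> conj_set G \<one> D = D"
  unfolding conj_set_def by (auto simp: subset_iff image_iff)

lemma conj_set_inv:
  assumes "a \<in> carrier G" "D \<subseteq> carrier G"
  shows "conj_set G (inv a) (conj_set G a D) = D"
  using assms by (simp add: conj_set_mult[symmetric] conj_set_one)

lemma card_conj_set:
  assumes "g \<in> carrier G" "D \<subseteq> carrier G"
  shows "card (conj_set G g D) = card D"
  unfolding conj_set_def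
proof (rule card_image, rule inj_onI)
  fix u v assume "u \<in> D" "v \<in> D" "g \<otimes> u \<otimes> inv g = g \<otimes> v \<otimes> inv g"
  then have "g \<otimes> u = g \<otimes> v"
    using assms \<open>u \<in> D\<close> \<open>v \<in> D\<close> r_cancel[of "inv g" "g \<otimes> u" "g \<otimes> v"] by (simp add: subset_iff)
  then show "u = v" using assms \<open>u \<in> D\<close> \<open>v \<in> D\<close> by (simp add: subset_iff)
qed

lemma conj_set_generate:
  assumes g: "g \<in> carrier G" and x: "x \<in> carrier G"
  shows "conj_set G g (generate G {x}) = generate G {g \<otimes> x \<otimes> inv g}"
proof
  have gx: "g \<otimes> x \<otimes> inv g \<in> carrier G" using g x by simp
  show "conj_set G g (generate G {x}) \<subseteq> generate G {g \<otimes> x \<otimes> inv g}"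
  proof
    fix d assume "d \<in> conj_set G g (generate G {x})"
    then obtain c where c: "c \<in> generate G {x}" "d = g \<otimes> c \<otimes> inv g"
      unfolding conj_set_def by auto
    have "g \<otimes> c \<otimes> inv g \<in> generate G {g \<otimes> x \<otimes> inv g}"
    proof (rule conj_gen[OF g _ _ _ c(1)])
      show "{x} \<subseteq> carrier G" using x by simp
      show "subgroup (generate G {g \<otimes> x \<otimes> inv g}) G" using gx by (simp add: generate_is_subgroup)
      show "\<forall>s\<in>{x}. g \<otimes> s \<otimes> inv g \<in> generate G {g \<otimes> x \<otimes> inv g}" by (simp add: generate.incl)
    qed
    then show "d \<in> generate G {g \<otimes> x \<otimes> inv g}" using c by simp
  qed
  show "generate G {g \<otimes> x \<otimes> inv g} \<subseteq> conj_set G g (generate G {x})"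
  proof
    fix d assume d: "d \<in> generate G {g \<otimes> x \<otimes> inv g}"
    have e: "inv g \<otimes> (g \<otimes> x \<otimes> inv g) \<otimes> inv (inv g) = x"
      using g x by (simp add: m_assoc) (simp add: m_assoc[symmetric])
    have "inv g \<otimes> d \<otimes> inv (inv g) \<in> generate G {x}"
    proof (rule conj_gen[OF inv_closed[OF g] _ _ _ d])
      show "{g \<otimes> x \<otimes> inv g} \<subseteq> carrier G" using gx by simp
      show "subgroup (generate G {x}) G" using x by (simp add: generate_is_subgroup)
      show "\<forall>s\<in>{g \<otimes> x \<otimes> inv g}. inv g \<otimes> s \<otimes> inv (inv g) \<in> generate G {x}" using e by (simp add: generate.incl)
    qed
    moreover have dc: "d \<in> carrier G" using d generate_in_carrier gx by blast
    moreover have "d = g \<otimes> (inv g \<otimes> d \<otimes> inv (inv g)) \<otimes> inv g"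
      using g dc by (simp add: m_assoc) (simp add: m_assoc[symmetric])
    ultimately show "d \<in> conj_set G g (generate G {x})" unfolding conj_set_def by blast
  qed
qed

lemma rcos_eq_iff:
  assumes H: "subgroup H G" and a: "a \<in> carrier G" and b: "b \<in> carrier G"
  shows "H #> a = H #> b \<longleftrightarrow> a \<otimes> inv b \<in> H"
proof
  assume "H #> a = H #> b"
  then have "a \<in> H #> b" using rcos_self[OF a H] by simp
  then obtain h where "h \<in> H" "a = h \<otimes> b" unfolding r_coset_def by auto
  then show "a \<otimes> inv b \<in> H" using b subgroup.mem_carrier[OF H] by (simp add: m_assoc)
next
  assume h: "a \<otimes> inv b \<in> H"
  have "H #> a = H #> ((a \<otimes> inv b) \<otimes> b)" using a b by (simp add: m_assoc)
  also have "\<dots> = (H #> (a \<otimes> inv b)) #> b"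
    using a b subgroup.subset[OF H] by (simp add: coset_mult_assoc)
  also have "\<dots> = H #> b" using subgroup.rcos_const[OF H is_group h] by simp
  finally show "H #> a = H #> b" .
qed

lemma coset_count:
  assumes fin: "finite (carrier G)" and H: "subgroup H G" and S: "S \<subseteq> carrier G"
    and cl: "\<forall>h\<in>H. \<forall>s\<in>S. h \<otimes> s \<in> S"
  shows "card S = card H * card {H #> s | s. s \<in> S}"
proof -
  let ?C = "{H #> s | s. s \<in> S}"
  have U: "\<Union>?C = S"
  proof
    show "\<Union>?C \<subseteq> S" using cl unfolding r_coset_def by auto
    show "S \<subseteq> \<Union>?C" using rcos_self[OF _ H] S by blast
  qed
  have Crc: "?C \<subseteq> rcosets H" using S subgroup.subset[OF H] by (auto intro: rcosetsI)
  have "finite (rcosets H)" using fin rcosets_subset_PowG[OF H] by (meson finite_Pow_iff finite_subset)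
  then have finC: "finite ?C" using Crc finite_subset by blast
  have "card H * card ?C = card (\<Union>?C)"
  proof (rule card_partition)
    show "finite ?C" by fact
    show "finite (\<Union>?C)" using U S fin finite_subset by auto
    show "card c = card H" if "c \<in> ?C" for c
    proof -
      have "c \<in> rcosets H" using that Crc by blast
      then show ?thesis using card_rcosets_equal[of c H] subgroup.subset[OF H] by simp
    qed
    show "c1 \<inter> c2 = {}" if "c1 \<in> ?C" "c2 \<in> ?C" "c1 \<noteq> c2" for c1 c2
    proof -
      have "c1 \<in> rcosets H" "c2 \<in> rcosets H" using that Crc by blast+
      then have "disjnt c1 c2" using rcos_disjoint[OF H] that(3) unfolding pairwise_def by blast
      then show ?thesis unfolding disjnt_def .
    qed
  qed
  then show ?thesis using U by simp
qed

end



context group begin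

lemma coset_parity:
  assumes fin: "finite (carrier G)" and H: "subgroup H G" and S: "S \<subseteq> carrier G"
    and clL: "\<forall>h\<in>H. \<forall>s\<in>S. h \<otimes> s \<in> S" and clR: "\<forall>s\<in>S. s \<otimes> x \<in> S"
    and x: "x \<in> carrier G" and xk: "x [^] ((2::nat)^k) = \<one>"
  shows "card {H #> s | s. s \<in> S} mod 2 = card {H #> s | s. s \<in> S \<and> s \<otimes> x \<otimes> inv s \<in> H} mod 2"
proof -
  let ?E = "{H #> s | s. s \<in> S}"
  define f where "f = (\<lambda>T. T #> x)"
  have Hs: "H \<subseteq> carrier G" using subgroup.subset[OF H] .
  have fE: "f (H #> s) = H #> (s \<otimes> x)" if "s \<in> S" for s
    unfolding f_def using that S x Hs by (simp add: coset_mult_assoc subset_iff)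
  have iter: "(f ^^ n) (H #> s) = H #> (s \<otimes> x [^] n)" if s: "s \<in> S" for s and n :: nat
  proof (induction n)
    case 0
    then show ?case using s S by (auto simp: subset_iff)
  next
    case (Suc n)
    have sc: "s \<in> carrier G" using s S by auto
    have "(f ^^ Suc n) (H #> s) = (H #> (s \<otimes> x [^] n)) #> x" using Suc by (simp add: f_def)
    also have "\<dots> = H #> (s \<otimes> x [^] n \<otimes> x)" using sc x Hs by (simp add: coset_mult_assoc)
    also have "\<dots> = H #> (s \<otimes> x [^] Suc n)" using sc x by (simp add: m_assoc nat_pow_Suc)
    finally show ?case .
  qed
  have Crc: "?E \<subseteq> rcosets H" using S Hs by (auto intro: rcosetsI)
  have "finite (rcosets H)" using fin rcosets_subset_PowG[OF H] by (meson finite_Pow_iff finite_subset)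
  then have finE: "finite ?E" using Crc finite_subset by blast
  have mapsE: "\<forall>T\<in>?E. f T \<in> ?E"
  proof
    fix T assume "T \<in> ?E"
    then obtain s where s: "s \<in> S" "T = H #> s" by auto
    then have "f T = H #> (s \<otimes> x)" using fE by simp
    moreover have "s \<otimes> x \<in> S" using clR s by auto
    ultimately show "f T \<in> ?E" by blast
  qed
  have perE: "\<forall>T\<in>?E. (f ^^ (2^k)) T = T"
  proof
    fix T assume "T \<in> ?E"
    then obtain s where s: "s \<in> S" "T = H #> s" by auto
    then have "s \<in> carrier G" using S by auto
    then show "(f ^^ (2^k)) T = T" using iter[OF s(1), of "2^k"] s xk by simp
  qed
  have 1: "card ?E mod 2 = card {T\<in>?E. f T = T} mod 2"
    by (rule perm_parity[OF finE mapsE perE])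
  have "{T\<in>?E. f T = T} = {H #> s | s. s \<in> S \<and> s \<otimes> x \<otimes> inv s \<in> H}"
  proof -
    have fix_iff: "f (H #> s) = H #> s \<longleftrightarrow> s \<otimes> x \<otimes> inv s \<in> H" if "s \<in> S" for s
    proof -
      have sc: "s \<in> carrier G" using that S by auto
      show ?thesis using fE[OF that] rcos_eq_iff[OF H _ sc, of "s \<otimes> x"] sc x by simp
    qed
    show ?thesis
    proof (intro equalityI subsetI)
      fix T assume "T \<in> {T\<in>?E. f T = T}"
      then obtain s where s: "s \<in> S" "T = H #> s" "f T = T" by auto
      then show "T \<in> {H #> s | s. s \<in> S \<and> s \<otimes> x \<otimes> inv s \<in> H}"
        using fix_iff[OF s(1)] by auto
    next
      fix T assume "T \<in> {H #> s | s. s \<in> S \<and> s \<otimes> x \<otimes> inv s \<in> H}"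
      then obtain s where s: "s \<in> S" "T = H #> s" "s \<otimes> x \<otimes> inv s \<in> H" by auto
      then show "T \<in> {T\<in>?E. f T = T}"
        using fix_iff[OF s(1)] by auto
    qed
  qed
  with 1 show ?thesis by simp
qed

end



context group begin

lemma Nout:
  assumes fin: "finite (carrier G)" and N: "N \<lhd> G" and c2: "card (rcosets N) = 2"
    and a: "a \<in> carrier G" "a \<notin> N" and b: "b \<in> carrier G" "b \<notin> N"
  shows "a \<otimes> inv b \<in> N"
proof -
  have Ns: "subgroup N G" using N normal_imp_subgroup by blast
  have Nsub: "N \<subseteq> carrier G" using subgroup.subset[OF Ns] .
  have finR: "finite (rcosets N)" using fin rcosets_subset_PowG[OF Ns] by (meson finite_Pow_iff finite_subset)
  have "N #> \<one> = N" using Nsub by simp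
  then have N1: "N \<in> rcosets N" using rcosetsI[OF Nsub one_closed] by simp
  have Na: "N #> a \<in> rcosets N" "N #> b \<in> rcosets N" using rcosetsI[OF Nsub] a b by auto
  have ne: "N #> a \<noteq> N" "N #> b \<noteq> N" using rcos_self[OF _ Ns] a b by auto
  show ?thesis
  proof (rule ccontr)
    assume "a \<otimes> inv b \<notin> N"
    then have "N #> a \<noteq> N #> b" using rcos_eq_iff[OF Ns a(1) b(1)] by simp
    then have "card {N, N #> a, N #> b} = 3" using ne by auto
    moreover have "card {N, N #> a, N #> b} \<le> card (rcosets N)"
      using N1 Na finR by (intro card_mono) auto
    ultimately show False using c2 by simp
  qed
qed

lemma half:
  assumes fin: "finite (carrier G)" and Ns: "subgroup N G"
    and No: "\<And>a b. a \<in> carrier G \<Longrightarrow> a \<notin> N \<Longrightarrow> b \<in> carrier G \<Longrightarrow> b \<notin> N \<Longrightarrow> a \<otimes> inv b \<in> N"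
    and D: "subgroup D G" and d0: "d0 \<in> D" "d0 \<notin> N"
  shows "card D = 2 * card (D - N)"
proof -
  have Dc: "D \<subseteq> carrier G" using subgroup.subset[OF D] .
  have d0c: "d0 \<in> carrier G" using d0 Dc by auto
  have finD: "finite D" using fin Dc finite_subset by blast
  have img: "(\<lambda>d. d0 \<otimes> d) ` (D \<inter> N) = D - N"
  proof (intro equalityI subsetI)
    fix e assume "e \<in> (\<lambda>d. d0 \<otimes> d) ` (D \<inter> N)"
    then obtain d where d: "d \<in> D" "d \<in> N" "e = d0 \<otimes> d" by auto
    have dc: "d \<in> carrier G" using d Dc by auto
    have "e \<in> D" using d d0 subgroup.m_closed[OF D] by auto
    moreover have "e \<notin> N"
    proof
      assume "e \<in> N"
      then have "e \<otimes> inv d \<in> N" using d subgroup.m_closed[OF Ns] subgroup.m_inv_closed[OF Ns] by auto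
      moreover have "e \<otimes> inv d = d0" using d(3) dc d0c by (simp add: m_assoc)
      ultimately show False using d0 by simp
    qed
    ultimately show "e \<in> D - N" by simp
  next
    fix e assume e: "e \<in> D - N"
    have ec: "e \<in> carrier G" using e Dc by auto
    have "inv d0 \<notin> N" using d0 d0c subgroup.m_inv_closed[OF Ns] by (metis inv_inv)
    moreover have "inv e \<notin> N" using e ec subgroup.m_inv_closed[OF Ns] by (metis inv_inv DiffD2)
    ultimately have "inv d0 \<otimes> inv (inv e) \<in> N" using No[of "inv d0" "inv e"] d0c ec by simp
    then have i: "inv d0 \<otimes> e \<in> N" using ec by simp
    have "inv d0 \<otimes> e \<in> D" using e d0 subgroup.m_closed[OF D] subgroup.m_inv_closed[OF D] by auto
    moreover have "e = d0 \<otimes> (inv d0 \<otimes> e)" using ec d0c by (simp add: m_assoc[symmetric])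
    ultimately show "e \<in> (\<lambda>d. d0 \<otimes> d) ` (D \<inter> N)" using i by blast
  qed
  have "inj_on (\<lambda>d. d0 \<otimes> d) (D \<inter> N)"
    using d0c Dc by (intro inj_onI) (auto simp: subset_iff)
  then have "card (D \<inter> N) = card (D - N)" using img card_image by fastforce
  moreover have "card D = card (D \<inter> N) + card (D - N)"
    using finD card_Un_disjoint[of "D \<inter> N" "D - N"] by (metis Int_Diff_Un Int_Diff_disjoint finite_Diff finite_Int)
  ultimately show ?thesis by simp
qed

end

lemma double_count:
  assumes "finite AA" "finite BB"
  shows "sum (\<lambda>y. card {x\<in>AA. Q x y}) BB = sum (\<lambda>x. card {y\<in>BB. Q x y}) AA"
proof -
  have 1: "card {x\<in>AA. Q x y} = sum (\<lambda>x. if Q x y then (1::nat) else 0) AA" for y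
    using assms(1) by (simp add: sum.If_cases Int_def)
  have 2: "card {y\<in>BB. Q x y} = sum (\<lambda>y. if Q x y then (1::nat) else 0) BB" for x
    using assms(2) by (simp add: sum.If_cases Int_def)
  show ?thesis unfolding 1 2 by (rule sum.swap)
qed

lemma odd_pow_dvd:
  fixes f :: nat
  assumes "odd f" "2^j dvd f * 2^a"
  shows "j \<le> a"
proof -
  have "coprime ((2::nat)^j) f" using assms(1) by simp
  then have "(2::nat)^j dvd 2^a" using assms(2) by (simp add: coprime_dvd_mult_right_iff)
  then show ?thesis by (simp add: power_dvd_iff_le_multiplicity)
qed


theorem lemma2p7:
  fixes G (structure) and N :: "'a set"
  assumes "group G"
    and "finite (carrier G)"
    and "good_group G"
    and "N \<lhd> G"
    and "card (rcosets\<^bsub>G\<^esub> N) = 2"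
  shows "\<exists>x y. x \<in> carrier G - N \<and> y \<in> carrier G - N \<and>
           two_element G x \<and> two_element G y \<and>
           \<not> (\<exists>g \<in> carrier G. conj_set G g (generate G {x}) = generate G {y})"
proof (rule ccontr)
  interpret group G by fact
  note fin = assms(2)
  assume neg: "\<not> ?thesis"
  have Hyp: "\<exists>g \<in> carrier G. conj_set G g (generate G {u}) = generate G {v}"
    if "u \<in> carrier G - N" "v \<in> carrier G - N" "two_element G u" "two_element G v" for u v
    using neg that by blast
  have Ns: "subgroup N G" using assms(4) normal_imp_subgroup by blast
  have Nc: "N \<subseteq> carrier G" using subgroup.subset[OF Ns] .
  have No: "\<And>a b. a \<in> carrier G \<Longrightarrow> a \<notin> N \<Longrightarrow> b \<in> carrier G \<Longrightarrow> b \<notin> N \<Longrightarrow> a \<otimes> inv b \<in> N"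
    using Nout[OF fin assms(4) assms(5)] by blast
  have oG: "order G = 2 * card N" using lagrange[OF Ns] assms(5) by simp
  define m where "m = multiplicity (2::nat) (order G)"
  obtain r where r: "order G = 2^m * r" "\<not> 2 dvd r"
  proof -
    have "order G \<noteq> 0" using order_gt_0_iff_finite fin by simp
    then show ?thesis using multiplicity_decompose'[of "order G" 2] that unfolding m_def by auto
  qed
  obtain P where P: "subgroup P G" "card P = 2^m"
    using sylow_thm[of 2 G m r] r fin assms(1) by auto
  have Pc: "P \<subseteq> carrier G" using subgroup.subset[OF P(1)] .
  have m1: "m \<ge> 1"
  proof (rule ccontr)
    assume "\<not> m \<ge> 1"
    then have "m = 0" by simp
    then have "2 * card N = r" using r oG by simp
    then show False using r(2) by (metis dvd_triv_left)
  qed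
  have "sylow2_subgroup G P" unfolding sylow2_subgroup_def m_def[symmetric] using P by simp
  moreover have "P \<noteq> {\<one>}"
  proof
    assume "P = {\<one>}"
    then have "card P = 1" by simp
    moreover have "(2::nat) ^ m \<ge> 2" using m1 by (cases m) auto
    ultimately show False using P(2) by simp
  qed
  ultimately have Pnc: "\<not> cyclic_group (subgroup_generated G P)"
    using assms(3) unfolding good_group_def by blast
  have "\<not> P \<subseteq> N"
  proof
    assume PN: "P \<subseteq> N"
    have "card N = card P * card {P #> s | s. s \<in> N}"
      by (rule coset_count[OF fin P(1) Nc]) (use PN subgroup.m_closed[OF Ns] in blast)
    then obtain k where k: "card N = 2^m * k" using P(2) by auto
    then have "2^m * r = 2^m * (2 * k)" using oG r by simp
    then have "r = 2 * k" by simp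
    then show False using r(2) by simp
  qed
  then obtain x where xP: "x \<in> P" and xN: "x \<notin> N" by blast
  have xc: "x \<in> carrier G" using xP Pc by blast
  define C where "C = generate G {x}"
  have Cs: "subgroup C G" unfolding C_def using xc by (simp add: generate_is_subgroup)
  have Cc: "C \<subseteq> carrier G" using subgroup.subset[OF Cs] .
  have CP: "C \<subseteq> P" unfolding C_def using xP P(1) by (simp add: generate_subgroup_incl)
  have xC: "x \<in> C" unfolding C_def by (simp add: generate.incl)
  have cardP_dvd: "card H dvd card P" if "subgroup H G" "H \<subseteq> P" for H
  proof -
    have "card P = card H * card {H #> s | s. s \<in> P}"
      by (rule coset_count[OF fin that(1) Pc]) (use that subgroup.m_closed[OF P(1)] in blast)
    then show ?thesis by simp
  qed
  have twoP: "two_element G y" if "y \<in> P" for y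
  proof -
    have yc: "y \<in> carrier G" using that Pc by blast
    have "generate G {y} \<subseteq> P" using that P(1) by (simp add: generate_subgroup_incl)
    then have "card (generate G {y}) dvd 2^m" using cardP_dvd[of "generate G {y}"] yc P(2)
      by (simp add: generate_is_subgroup)
    then obtain i where "card (generate G {y}) = 2^i" using divides_primepow_nat[of 2] by auto
    then show ?thesis unfolding two_element_def using yc generate_pow_card[OF yc] by auto
  qed
  obtain a where a: "card C = 2^a"
  proof -
    have "card C dvd 2^m" using cardP_dvd[OF Cs CP] P(2) by simp
    then show ?thesis using that divides_primepow_nat[of 2] by auto
  qed
  have ordx: "ord x = card C" unfolding C_def using generate_pow_card[OF xc] .
  have xk: "x [^] ((2::nat)^a) = \<one>" using pow_ord_eq_1[OF xc] ordx a by simp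
  have conjN: "h \<otimes> x \<otimes> inv h \<notin> N" if "h \<in> carrier G" for h
  proof
    assume "h \<otimes> x \<otimes> inv h \<in> N"
    then have "inv h \<otimes> (h \<otimes> x \<otimes> inv h) \<otimes> inv (inv h) \<in> N"
      using normal.inv_op_closed2[OF assms(4)] that by blast
    moreover have "inv h \<otimes> (h \<otimes> x \<otimes> inv h) \<otimes> inv (inv h) = x"
      using that xc by (simp add: m_assoc) (simp add: m_assoc[symmetric])
    ultimately show False using xN by simp
  qed
  define k0 where "k0 = card (C - N)"
  have cC: "card C = 2 * k0" unfolding k0_def by (rule half[OF fin Ns No Cs xC xN])
  define M where "M = {g \<in> carrier G. g \<otimes> x \<otimes> inv g \<in> P}"
  have Mc: "M \<subseteq> carrier G" unfolding M_def by auto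
  have Mcl: "\<forall>p\<in>P. \<forall>g\<in>M. p \<otimes> g \<in> M"
  proof (intro ballI)
    fix p g assume p: "p \<in> P" and g: "g \<in> M"
    have pc: "p \<in> carrier G" using p Pc by blast
    have gc: "g \<in> carrier G" and gx: "g \<otimes> x \<otimes> inv g \<in> P" using g unfolding M_def by auto
    have "p \<otimes> g \<otimes> x \<otimes> inv (p \<otimes> g) = p \<otimes> (g \<otimes> x \<otimes> inv g) \<otimes> inv p"
      using pc gc xc by (simp add: m_assoc inv_mult_group)
    also have "\<dots> \<in> P" using p gx subgroup.m_closed[OF P(1)] subgroup.m_inv_closed[OF P(1)] by blast
    finally show "p \<otimes> g \<in> M" unfolding M_def using pc gc by simp
  qed
  define f where "f = card {P #> s | s. s \<in> M}"
  have cM: "card M = 2^m * f" unfolding f_def using coset_count[OF fin P(1) Mc Mcl] P(2) by simp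
  have "card {P #> s | s. s \<in> carrier G} mod 2 = card {P #> s | s. s \<in> carrier G \<and> s \<otimes> x \<otimes> inv s \<in> P} mod 2"
    by (rule coset_parity[OF fin P(1) _ _ _ xc xk]) (use P(1) Pc xc in \<open>auto intro: subgroup.mem_carrier\<close>)
  moreover have "{P #> s | s. s \<in> carrier G} = rcosets P" unfolding RCOSETS_def by auto
  moreover have "{P #> s | s. s \<in> carrier G \<and> s \<otimes> x \<otimes> inv s \<in> P} = {P #> s | s. s \<in> M}"
    unfolding M_def by auto
  moreover have "card (rcosets P) = r" using lagrange[OF P(1)] P(2) r by simp
  ultimately have fodd: "odd f" unfolding f_def using r(2) by (simp add: even_iff_mod_2_eq_zero)
  define NC where "NC = {g \<in> carrier G. conj_set G g C = C}"
  have NCc: "NC \<subseteq> carrier G" unfolding NC_def by auto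
  have NCm: "a \<otimes> b \<in> NC" if "a \<in> NC" "b \<in> NC" for a b
    using that conj_set_mult[OF _ _ Cc] unfolding NC_def by auto
  have NCi: "inv a \<in> NC" if "a \<in> NC" for a
  proof -
    have ac: "a \<in> carrier G" and e: "conj_set G a C = C" using that unfolding NC_def by auto
    have "conj_set G (inv a) C = C" using conj_set_inv[OF ac Cc] e by simp
    then show ?thesis using ac unfolding NC_def by simp
  qed
  have NC1: "\<one> \<in> NC" unfolding NC_def using conj_set_one[OF Cc] by simp
  define Rl where "Rl = (\<lambda>h y. generate G {h \<otimes> x \<otimes> inv h} = generate G {y})"
  have finPN: "finite (P - N)" using fin Pc finite_subset by blast
  have lhs: "card {h \<in> carrier G. Rl h y} = card NC" if y: "y \<in> P - N" for y
  proof -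
    have yc: "y \<in> carrier G" using y Pc by blast
    obtain h0 where h0: "h0 \<in> carrier G" "conj_set G h0 C = generate G {y}"
      using Hyp[of x y] xc xN yc y twoP xP unfolding C_def by auto
    have "{h \<in> carrier G. Rl h y} = (\<lambda>n. h0 \<otimes> n) ` NC"
    proof (intro equalityI subsetI)
      fix h assume "h \<in> {h \<in> carrier G. Rl h y}"
      then have hc: "h \<in> carrier G" and e: "conj_set G h C = conj_set G h0 C"
        using h0 conj_set_generate[OF _ xc] unfolding Rl_def C_def by auto
      have "conj_set G (inv h0 \<otimes> h) C = conj_set G (inv h0) (conj_set G h0 C)"
        using conj_set_mult[OF _ hc Cc, of "inv h0"] h0(1) e by simp
      also have "\<dots> = C" using conj_set_inv[OF h0(1) Cc] .
      finally have "inv h0 \<otimes> h \<in> NC" unfolding NC_def using h0(1) hc by simp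
      moreover have "h = h0 \<otimes> (inv h0 \<otimes> h)" using h0(1) hc by (simp add: m_assoc[symmetric])
      ultimately show "h \<in> (\<lambda>n. h0 \<otimes> n) ` NC" by blast
    next
      fix h assume "h \<in> (\<lambda>n. h0 \<otimes> n) ` NC"
      then obtain n where n: "n \<in> NC" "h = h0 \<otimes> n" by auto
      have nc: "n \<in> carrier G" using n NCc by blast
      have hc: "h \<in> carrier G" using n nc h0 by simp
      have "conj_set G h C = conj_set G h0 (conj_set G n C)" using n conj_set_mult[OF h0(1) nc Cc] by simp
      also have "\<dots> = generate G {y}" using n h0 unfolding NC_def by simp
      finally show "h \<in> {h \<in> carrier G. Rl h y}"
        using hc conj_set_generate[OF hc xc] unfolding Rl_def C_def by simp
    qed
    moreover have "inj_on (\<lambda>n. h0 \<otimes> n) NC" using h0(1) NCc by (intro inj_onI) (auto simp: subset_iff)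
    ultimately show ?thesis by (simp add: card_image)
  qed
  have rhs: "card {y \<in> P - N. Rl h y} = (if h \<in> M then k0 else 0)" if hc: "h \<in> carrier G" for h
  proof -
    define D where "D = generate G {h \<otimes> x \<otimes> inv h}"
    have hx: "h \<otimes> x \<otimes> inv h \<in> carrier G" using hc xc by simp
    have Ds: "subgroup D G" unfolding D_def using hx by (simp add: generate_is_subgroup)
    have DC: "D = conj_set G h C" unfolding D_def C_def using conj_set_generate[OF hc xc] by simp
    have cD: "card D = card C" using DC card_conj_set[OF hc Cc] by simp
    have hxD: "h \<otimes> x \<otimes> inv h \<in> D" unfolding D_def by (simp add: generate.incl)
    have cDN: "card (D - N) = k0" using half[OF fin Ns No Ds hxD conjN[OF hc]] cD cC by simp
    show ?thesis
    proof (cases "h \<in> M")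
      case False
      have "{y \<in> P - N. Rl h y} = {}"
      proof (rule ccontr)
        assume "{y \<in> P - N. Rl h y} \<noteq> {}"
        then obtain y where y: "y \<in> P" "Rl h y" by auto
        have "generate G {y} \<subseteq> P" using y(1) P(1) by (simp add: generate_subgroup_incl)
        then have "D \<subseteq> P" using y(2) unfolding Rl_def D_def by simp
        then have "h \<in> M" using hxD hc unfolding M_def by auto
        then show False using False by simp
      qed
      then show ?thesis using False by (simp only: card.empty if_False)
    next
      case True
      have DP: "D \<subseteq> P" unfolding D_def using True P(1) unfolding M_def by (simp add: generate_subgroup_incl)
      have "{y \<in> P - N. Rl h y} = D - N"
      proof (intro equalityI subsetI)
        fix y assume "y \<in> {y \<in> P - N. Rl h y}"
        then have "y \<in> P - N" "D = generate G {y}" unfolding Rl_def D_def by auto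
        then show "y \<in> D - N" using generate.incl[of y "{y}" G] by auto
      next
        fix y assume y: "y \<in> D - N"
        have yP: "y \<in> P" using y DP by blast
        have yc: "y \<in> carrier G" using yP Pc by blast
        have sub: "generate G {y} \<subseteq> D" using y Ds by (simp add: generate_subgroup_incl)
        obtain g where g: "g \<in> carrier G" "conj_set G g C = generate G {y}"
          using Hyp[of x y] xc xN yc y twoP xP yP unfolding C_def by auto
        have "card (generate G {y}) = card D" using g card_conj_set[OF g(1) Cc] cD by simp
        moreover have "finite D" using fin subgroup.subset[OF Ds] finite_subset by blast
        ultimately have "generate G {y} = D" using sub card_subset_eq by blast
        then show "y \<in> {y \<in> P - N. Rl h y}" using yP y unfolding Rl_def D_def by auto
      qed
      then show ?thesis using True cDN by simp
    qed
  qed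
  have "sum (\<lambda>y. card {h \<in> carrier G. Rl h y}) (P - N) = sum (\<lambda>h. card {y \<in> P - N. Rl h y}) (carrier G)"
    by (rule double_count[OF fin finPN])
  moreover have "sum (\<lambda>y. card {h \<in> carrier G. Rl h y}) (P - N) = card (P - N) * card NC"
    using lhs by simp
  moreover have "sum (\<lambda>h. card {y \<in> P - N. Rl h y}) (carrier G) = card M * k0"
  proof -
    have "sum (\<lambda>h. card {y \<in> P - N. Rl h y}) (carrier G) = sum (\<lambda>h. if h \<in> M then k0 else 0) (carrier G)"
      using rhs by simp
    also have "\<dots> = card (carrier G \<inter> M) * k0" using fin by (simp add: sum.If_cases)
    also have "carrier G \<inter> M = M" using Mc by blast
    finally show ?thesis .
  qed
  ultimately have count: "card (P - N) * card NC = card M * k0" by simp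
  have cP: "card P = 2 * card (P - N)" using half[OF fin Ns No P(1) xP xN] .
  have cNC: "card NC = f * card C"
  proof -
    have "card (P - N) * card NC = card (P - N) * (2 * f * k0)"
      using count cM P(2) cP by simp
    moreover have "card (P - N) > 0" using xP xN finPN card_gt_0_iff by blast
    ultimately show ?thesis using cC by simp
  qed
  define K where "K = P \<inter> NC"
  have Ks: "subgroup K G"
  proof (rule subgroupI)
    show "K \<subseteq> carrier G" unfolding K_def using Pc by blast
    show "K \<noteq> {}" unfolding K_def using NC1 subgroup.one_closed[OF P(1)] by blast
    show "inv a \<in> K" if "a \<in> K" for a
      using that NCi subgroup.m_inv_closed[OF P(1)] unfolding K_def by blast
    show "a \<otimes> b \<in> K" if "a \<in> K" "b \<in> K" for a b
      using that NCm subgroup.m_closed[OF P(1)] unfolding K_def by blast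
  qed
  have CK: "C \<subseteq> K"
  proof
    fix c assume c: "c \<in> C"
    have cc: "c \<in> carrier G" using c Cc by blast
    have "conj_set G c C \<subseteq> C" unfolding conj_set_def
      using c subgroup.m_closed[OF Cs] subgroup.m_inv_closed[OF Cs] by blast
    moreover have "card (conj_set G c C) = card C" using card_conj_set[OF cc Cc] .
    moreover have "finite C" using fin Cc finite_subset by blast
    ultimately have "conj_set G c C = C" using card_subset_eq by blast
    then show "c \<in> K" unfolding K_def NC_def using c CP cc by blast
  qed
  have "card K dvd card NC"
  proof -
    have "card NC = card K * card {K #> s | s. s \<in> NC}"
      by (rule coset_count[OF fin Ks NCc]) (use NCm K_def in blast)
    then show ?thesis by simp
  qed
  moreover obtain j where j: "card K = 2^j"
  proof -
    have "card K dvd 2^m" using cardP_dvd[OF Ks] P(2) unfolding K_def by auto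
    then show ?thesis using that divides_primepow_nat[of 2] by auto
  qed
  ultimately have "2^j dvd f * 2^a" using cNC a by simp
  then have "j \<le> a" using odd_pow_dvd fodd by blast
  then have "card K \<le> card C" using j a by simp
  moreover have "finite K" using fin subgroup.subset[OF Ks] finite_subset by blast
  ultimately have KC: "K = C" using CK card_seteq by blast
  have CneP: "C \<noteq> P"
  proof
    assume CP': "C = P"
    have "generate G P = P" using P(1) Pc generate_subgroup_incl[of P P] generate.incl[of _ P G] by blast
    then have "subgroup_generated G P = subgroup_generated G {x}"
      unfolding subgroup_generated_def using CP' xc Pc unfolding C_def
      by (simp add: Int_absorb1 Int_absorb2)
    then show False using Pnc cyclic_group_generated by simp
  qed
  define E where "E = {C #> s | s. s \<in> P}"
  define F where "F = {C #> s | s. s \<in> P \<and> s \<otimes> x \<otimes> inv s \<in> C}"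
  have par: "card E mod 2 = card F mod 2" unfolding E_def F_def
    by (rule coset_parity[OF fin Cs Pc _ _ xc xk])
       (use CP xP subgroup.m_closed[OF P(1)] in blast)+
  have cPE: "card P = card C * card E" unfolding E_def
    by (rule coset_count[OF fin Cs Pc]) (use CP subgroup.m_closed[OF P(1)] in blast)
  have "card C < card P" using CP CneP fin Pc finite_subset psubset_card_mono by blast
  then have "a < m" using a P(2) by simp
  then have "(2::nat)^a * 2^(m - a) = 2^m" by (simp add: power_add[symmetric])
  then have "(2::nat)^a * card E = 2^a * 2^(m - a)" using cPE a P(2) by simp
  then have "card E = 2^(m - a)" by simp
  then have "even (card E)" using \<open>a < m\<close> by simp
  then have evF: "even (card F)" using par by (simp add: even_iff_mod_2_eq_zero)
  have CF: "C \<in> F" unfolding F_def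
  proof -
    have "C #> \<one> = C" using Cc by simp
    moreover have "\<one> \<otimes> x \<otimes> inv \<one> \<in> C" using xc xC by simp
    ultimately show "C \<in> {C #> s | s. s \<in> P \<and> s \<otimes> x \<otimes> inv s \<in> C}"
      using subgroup.one_closed[OF P(1)] by force
  qed
  have "F \<noteq> {C}" using evF by auto
  then obtain T where T: "T \<in> F" "T \<noteq> C" using CF by blast
  then obtain s where s: "s \<in> P" "s \<otimes> x \<otimes> inv s \<in> C" "T = C #> s" unfolding F_def by auto
  have sc: "s \<in> carrier G" using s Pc by blast
  have "s \<notin> C" using s T subgroup.rcos_const[OF Cs is_group] by auto
  moreover have "s \<in> NC"
  proof -
    have "conj_set G s C = generate G {s \<otimes> x \<otimes> inv s}" unfolding C_def using conj_set_generate[OF sc xc] .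
    also have "\<dots> \<subseteq> C" using s(2) Cs by (simp add: generate_subgroup_incl)
    finally have "conj_set G s C \<subseteq> C" .
    moreover have "card (conj_set G s C) = card C" using card_conj_set[OF sc Cc] .
    moreover have "finite C" using fin Cc finite_subset by blast
    ultimately have "conj_set G s C = C" using card_subset_eq by blast
    then show ?thesis unfolding NC_def using sc by simp
  qed
  ultimately show False using KC s(1) unfolding K_def by blast

qed


end
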